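(* Let $\mathbf v=(v_1,\dots,v_m)$ and $\mathbf k=(k_1,\dots,k_m)$ be $m$-tuples of positive integers with $\mathbf v\ge\mathbf k$, and let $t\le m$ be a positive integer with $t\le\sum_i k_i$. Then \[ C(\mathbf v,\mathbf k,t)\ \ge\ \max_{\{i_1,\dots,i_t\}\subseteq\{1,\dots,m\}}\left\lceil\frac{v_{i_1}}{k_{i_1}}\left\lceil\frac{v_{i_2}}{k_{i_2}}\cdots\left\lceil\frac{v_{i_t}}{k_{i_t}}\right\rceil\cdots\right\rceil\right\rceil, \] where the maximum is over all sets of $t$ distinct indices (taken in any order).
   Context: Let $X_1,\dots,X_m$ be pairwise disjoint sets with $|X_i|=v_i$. A block is an $m$-tuple $(B_1,\dots,B_m)$ with $B_i\subseteq X_i$, $|B_i|=k_i$. An $m$-tuple of sets $(T_1,\dots,T_m)$ is $(\mathbf v,\mathbf k,t)$-admissible if $T_i\subseteq X_i$, $|T_i|\le k_i$ for all $i$ and $\sum_i|T_i|=t$; it is contained in a block if $T_i\subseteq B_i$ for all $i$. A generalized covering design ${\rm GC}(\mathbf v,\mathbf k,t)$ is a finite family (repetitions allowed) of blocks containing every admissible tuple in at least one block; $C(\mathbf v,\mathbf k,t)$ is the minimum number of blocks of such a design. *)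

theory Defs
  imports Complex_Main
begin

text \<open>Convention: the parts are indexed by i < m (0-based). The pairwise disjoint
ground sets X_i are modelled as X_i = {..< v i}, disjointness being implicit in the
indexing by i. An m-tuple of sets is a function nat \<Rightarrow> nat set (only values at i < m matter).\<close>

definition gc_block :: "nat \<Rightarrow> (nat \<Rightarrow> nat) \<Rightarrow> (nat \<Rightarrow> nat) \<Rightarrow> (nat \<Rightarrow> nat set) \<Rightarrow> bool" where
  "gc_block m v k B \<longleftrightarrow> (\<forall>i<m. B i \<subseteq> {..< v i} \<and> card (B i) = k i)"

definition gc_admissible :: "nat \<Rightarrow> (nat \<Rightarrow> nat) \<Rightarrow> (nat \<Rightarrow> nat) \<Rightarrow> nat \<Rightarrow> (nat \<Rightarrow> nat set) \<Rightarrow> bool" where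
  "gc_admissible m v k t T \<longleftrightarrow>
     (\<forall>i<m. T i \<subseteq> {..< v i} \<and> card (T i) \<le> k i) \<and> (\<Sum>i<m. card (T i)) = t"

definition gc_contained :: "nat \<Rightarrow> (nat \<Rightarrow> nat set) \<Rightarrow> (nat \<Rightarrow> nat set) \<Rightarrow> bool" where
  "gc_contained m T B \<longleftrightarrow> (\<forall>i<m. T i \<subseteq> B i)"

text \<open>A generalized covering design: a finite family of blocks (a list, so repetitions allowed).\<close>
definition is_GC :: "nat \<Rightarrow> (nat \<Rightarrow> nat) \<Rightarrow> (nat \<Rightarrow> nat) \<Rightarrow> nat \<Rightarrow> (nat \<Rightarrow> nat set) list \<Rightarrow> bool" where
  "is_GC m v k t D \<longleftrightarrow> (\<forall>B\<in>set D. gc_block m v k B) \<and>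
     (\<forall>T. gc_admissible m v k t T \<longrightarrow> (\<exists>B\<in>set D. gc_contained m T B))"

definition C_GC :: "nat \<Rightarrow> (nat \<Rightarrow> nat) \<Rightarrow> (nat \<Rightarrow> nat) \<Rightarrow> nat \<Rightarrow> nat" where
  "C_GC m v k t = (LEAST n. \<exists>D. is_GC m v k t D \<and> length D = n)"

fun nested_ceil :: "(nat \<Rightarrow> nat) \<Rightarrow> (nat \<Rightarrow> nat) \<Rightarrow> nat list \<Rightarrow> nat" where
  "nested_ceil v k [] = 1"
| "nested_ceil v k (i # is) = nat \<lceil>real (v i) / real (k i) * real (nested_ceil v k is)\<rceil>"

end

theory Submission
  imports Defs "HOL-Library.FuncSet"
begin

lemma count_sum:
  fixes n :: nat
  assumes "\<forall>B\<in>set D. B \<subseteq> {..<n}"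
  shows "(\<Sum>x<n. length (filter (\<lambda>B. x \<in> B) D)) = (\<Sum>B\<leftarrow>D. card B)"
  using assms
proof (induction D)
  case Nil then show ?case by simp
next
  case (Cons B D)
  have "(\<Sum>x<n. length (filter (\<lambda>B'. x \<in> B') (B # D)))
     = (\<Sum>x<n. (if x \<in> B then 1 else 0) + length (filter (\<lambda>B. x \<in> B) D))"
    by (rule sum.cong) auto
  also have "\<dots> = (\<Sum>x<n. (if x \<in> B then 1 else 0)) + (\<Sum>x<n. length (filter (\<lambda>B. x \<in> B) D))"
    by (rule sum.distrib)
  also have "(\<Sum>x<n. (if x \<in> B then 1 else 0::nat)) = card ({..<n} \<inter> B)"
    by (subst sum.If_cases) (simp_all add: Int_def)
  also have "{..<n} \<inter> B = B" using Cons.prems by auto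
  finally show ?case using Cons by simp
qed

lemma sum_list_const_card:
  assumes "\<forall>B\<in>set D. card (f B) = c"
  shows "(\<Sum>B\<leftarrow>D. card (f B)) = c * length D"
  using assms by (induction D) auto

lemma key:
  assumes "\<forall>j\<in>set xs. 0 < k j \<and> k j \<le> v j" "distinct xs"
    "\<forall>B\<in>set D. \<forall>j\<in>set xs. B j \<subseteq> {..<v j} \<and> card (B j) = k j"
    "\<forall>T. (\<forall>j\<in>set xs. \<exists>x<v j. T j = {x}) \<and> (\<forall>j. j \<notin> set xs \<longrightarrow> T j = {})
          \<longrightarrow> (\<exists>B\<in>set D. \<forall>j\<in>set xs. T j \<subseteq> B j)"
  shows "nested_ceil v k xs \<le> length D"
  using assms
proof (induction xs arbitrary: D)
  case Nil
  then have "\<exists>B\<in>set D. True" using Nil.prems(4)[rule_format, of "\<lambda>_. {}"] by auto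
  then show ?case by (cases D) auto
next
  case (Cons i xs)
  define N where "N = nested_ceil v k xs"
  have ki: "0 < k i" "k i \<le> v i" using Cons.prems(1) by auto
  have inot: "i \<notin> set xs" using Cons.prems(2) by simp
  have each: "N \<le> length (filter (\<lambda>B. x \<in> B i) D)" if x: "x < v i" for x
    unfolding N_def
  proof (rule Cons.IH)
    show "\<forall>j\<in>set xs. 0 < k j \<and> k j \<le> v j" using Cons.prems(1) by simp
    show "distinct xs" using Cons.prems(2) by simp
    show "\<forall>B\<in>set (filter (\<lambda>B. x \<in> B i) D). \<forall>j\<in>set xs. B j \<subseteq> {..<v j} \<and> card (B j) = k j"
      using Cons.prems(3) by auto
    show "\<forall>T. (\<forall>j\<in>set xs. \<exists>x<v j. T j = {x}) \<and> (\<forall>j. j \<notin> set xs \<longrightarrow> T j = {}) \<longrightarrow>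
        (\<exists>B\<in>set (filter (\<lambda>B. x \<in> B i) D). \<forall>j\<in>set xs. T j \<subseteq> B j)"
    proof (intro allI impI)
      fix T assume T: "(\<forall>j\<in>set xs. \<exists>x<v j. T j = {x}) \<and> (\<forall>j. j \<notin> set xs \<longrightarrow> T j = {})"
      let ?T = "T(i := {x})"
      have "(\<forall>j\<in>set (i#xs). \<exists>x<v j. ?T j = {x}) \<and> (\<forall>j. j \<notin> set (i#xs) \<longrightarrow> ?T j = {})"
        using T x by auto
      then obtain B where B: "B \<in> set D" "\<forall>j\<in>set (i#xs). ?T j \<subseteq> B j"
        using Cons.prems(4) by blast
      then have "x \<in> B i" by simp
      moreover have "\<forall>j\<in>set xs. T j \<subseteq> B j" using B inot by (metis fun_upd_other list.set_intros(2))
      ultimately show "\<exists>B\<in>set (filter (\<lambda>B. x \<in> B i) D). \<forall>j\<in>set xs. T j \<subseteq> B j"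
        using B(1) by auto
    qed
  qed
  have "v i * N = (\<Sum>x<v i. N)" by simp
  also have "\<dots> \<le> (\<Sum>x<v i. length (filter (\<lambda>B. x \<in> B i) D))"
    using each by (intro sum_mono) auto
  also have "\<dots> = (\<Sum>B\<leftarrow>map (\<lambda>B. B i) D. card B)"
  proof -
    have "(\<Sum>x<v i. length (filter (\<lambda>B. x \<in> B i) D)) = (\<Sum>x<v i. length (filter (\<lambda>B. x \<in> B) (map (\<lambda>B. B i) D)))"
      by (simp add: filter_map o_def)
    also have "\<dots> = (\<Sum>B\<leftarrow>map (\<lambda>B. B i) D. card B)"
      by (rule count_sum) (use Cons.prems(3) in auto)
    finally show ?thesis .
  qed
  also have "\<dots> = (\<Sum>B\<leftarrow>D. card (B i))" by (simp add: o_def)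
  also have "\<dots> = k i * length D"
    by (rule sum_list_const_card) (use Cons.prems(3) in auto)
  finally have ineq: "v i * N \<le> k i * length D" .
  have "real (v i) * real N \<le> real (k i) * real (length D)"
    using ineq by (metis of_nat_le_iff of_nat_mult)
  then have "real (v i) / real (k i) * real N \<le> real (length D)"
    using ki by (simp add: field_simps)
  then have "\<lceil>real (v i) / real (k i) * real N\<rceil> \<le> int (length D)"
    by (simp add: ceiling_le_iff)
  then show ?case unfolding N_def nested_ceil.simps by (simp only: nat_le_iff)
qed

lemma extend_subset:
  assumes "finite B" "A \<subseteq> B" "card A \<le> n" "n \<le> card B"
  shows "\<exists>S. A \<subseteq> S \<and> S \<subseteq> B \<and> card S = n"
proof -
  have "n - card A \<le> card (B - A)" using assms by (simp add: card_Diff_subset finite_subset)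
  then obtain R where R: "R \<subseteq> B - A" "card R = n - card A"
    by (meson obtain_subset_with_card_n)
  have fA: "finite A" using assms finite_subset by blast
  have fR: "finite R" using R assms finite_subset by (meson Diff_subset subset_trans)
  have "card (A \<union> R) = card A + card R" using R fA fR by (intro card_Un_disjoint) auto
  then show ?thesis using R assms by (intro exI[of _ "A \<union> R"]) auto
qed

lemma exists_GC:
  assumes "\<forall>i<m. 0 < k i \<and> k i \<le> v i"
  shows "\<exists>D. is_GC m v k t D"
proof -
  let ?Bs = "PiE {..<m} (\<lambda>i. {S. S \<subseteq> {..<v i} \<and> card S = k i})"
  have fin: "finite ?Bs" by (intro finite_PiE) auto
  obtain D where D: "set D = ?Bs" using finite_list[OF fin] by blast
  have "is_GC m v k t D"
    unfolding is_GC_def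
  proof (intro conjI ballI allI impI)
    fix B assume "B \<in> set D" then show "gc_block m v k B"
      using D unfolding gc_block_def by (auto simp: PiE_def Pi_def)
  next
    fix T assume T: "gc_admissible m v k t T"
    have "\<forall>i<m. \<exists>S. T i \<subseteq> S \<and> S \<subseteq> {..<v i} \<and> card S = k i"
    proof (intro allI impI)
      fix i assume "i < m"
      then show "\<exists>S. T i \<subseteq> S \<and> S \<subseteq> {..<v i} \<and> card S = k i"
        using T assms unfolding gc_admissible_def by (intro extend_subset) auto
    qed
    then obtain S where S: "\<forall>i<m. T i \<subseteq> S i \<and> S i \<subseteq> {..<v i} \<and> card (S i) = k i"
      by metis
    let ?B = "restrict S {..<m}"
    have "?B \<in> ?Bs" using S by auto
    then show "\<exists>B\<in>set D. gc_contained m T B"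
      using S D unfolding gc_contained_def by (intro bexI[of _ ?B]) auto
  qed
  then show ?thesis by blast
qed

theorem corollary5p2:
  fixes m t :: nat and v k :: "nat \<Rightarrow> nat"
  assumes "\<forall>i<m. 0 < k i \<and> k i \<le> v i"
    and "0 < t" and "t \<le> m" and "t \<le> (\<Sum>i<m. k i)"
  shows "C_GC m v k t \<ge>
    Max {nested_ceil v k xs | xs. distinct xs \<and> length xs = t \<and> set xs \<subseteq> {..<m}}"
proof -
  let ?S = "{nested_ceil v k xs | xs. distinct xs \<and> length xs = t \<and> set xs \<subseteq> {..<m}}"
  have fin: "finite ?S"
  proof -
    have "?S \<subseteq> nested_ceil v k ` {xs. set xs \<subseteq> {..<m} \<and> length xs = t}" by auto
    moreover have "finite {xs. set xs \<subseteq> {..<m} \<and> length xs = t}"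
      by (rule finite_lists_length_eq) simp
    ultimately show ?thesis using finite_subset by blast
  qed
  have ne: "?S \<noteq> {}"
  proof -
    have "nested_ceil v k [0..<t] \<in> ?S" using assms(3) by auto
    then show ?thesis by blast
  qed
  obtain D0 where D0: "is_GC m v k t D0" using exists_GC[OF assms(1)] by blast
  have "\<exists>D. is_GC m v k t D \<and> length D = C_GC m v k t"
    unfolding C_GC_def by (rule LeastI_ex) (use D0 in blast)
  then obtain D where D: "is_GC m v k t D" "length D = C_GC m v k t" by blast
  have bound: "nested_ceil v k xs \<le> length D"
    if xs: "distinct xs" "length xs = t" "set xs \<subseteq> {..<m}" for xs
  proof (rule key)
    show "\<forall>j\<in>set xs. 0 < k j \<and> k j \<le> v j" using xs assms(1) by auto
    show "distinct xs" by fact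
    show "\<forall>B\<in>set D. \<forall>j\<in>set xs. B j \<subseteq> {..<v j} \<and> card (B j) = k j"
    proof (intro ballI)
      fix B j assume "B \<in> set D" "j \<in> set xs"
      then have "gc_block m v k B" "j < m" using D(1) xs unfolding is_GC_def by auto
      then show "B j \<subseteq> {..<v j} \<and> card (B j) = k j" unfolding gc_block_def by blast
    qed
    show "\<forall>T. (\<forall>j\<in>set xs. \<exists>x<v j. T j = {x}) \<and> (\<forall>j. j \<notin> set xs \<longrightarrow> T j = {}) \<longrightarrow>
        (\<exists>B\<in>set D. \<forall>j\<in>set xs. T j \<subseteq> B j)"
    proof (intro allI impI)
      fix T assume T: "(\<forall>j\<in>set xs. \<exists>x<v j. T j = {x}) \<and> (\<forall>j. j \<notin> set xs \<longrightarrow> T j = {})"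
      have cardT: "card (T j) = (if j \<in> set xs then 1 else 0)" for j
        using T by (cases "j \<in> set xs") auto
      have "(\<Sum>i<m. card (T i)) = (\<Sum>i<m. if i \<in> set xs then 1 else 0)"
        by (simp add: cardT)
      also have "\<dots> = card ({..<m} \<inter> set xs)" by (subst sum.If_cases) (auto simp: Int_def)
      also have "{..<m} \<inter> set xs = set xs" using xs by auto
      also have "card (set xs) = t" using xs distinct_card by metis
      finally have sumT: "(\<Sum>i<m. card (T i)) = t" .
      have "gc_admissible m v k t T"
        unfolding gc_admissible_def
      proof (intro conjI allI impI sumT)
        fix i assume i: "i < m"
        show "T i \<subseteq> {..<v i}" using T by (cases "i \<in> set xs") auto
        show "card (T i) \<le> k i" using cardT[of i] assms(1) i by auto
      qed
      then obtain B where "B \<in> set D" "gc_contained m T B" using D(1) unfolding is_GC_def by blast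
      then show "\<exists>B\<in>set D. \<forall>j\<in>set xs. T j \<subseteq> B j"
        using xs unfolding gc_contained_def by blast
    qed
  qed
  have "Max ?S \<in> ?S" using fin ne by (rule Max_in)
  then show ?thesis using bound D(2) by auto
qed

end
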